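(* For every $n\ge1$ and $k\ge1$ there is a deterministic protocol in the Robertson–Webb query model that runs in $k$ rounds and, for every instance with $n$ players, computes a proportional allocation in which every player receives a single interval, using a total of $O(k\,n^{1+1/k})$ queries.
   Context: Cake cutting: the cake is $[0,1]$; there are $n$ players, each with a private valuation $V_i(I)=\int_I v_i(x)\,dx$ given by a non-negative integrable density $v_i$, normalized so $V_i([0,1])=1$. An allocation is a partition of $[0,1]$ into pieces $A_1,\ldots,A_n$, player $i$ receiving $A_i$; it is proportional if $V_i(A_i)\ge1/n$ for all $i$. Robertson–Webb queries: $\mathrm{Cut}_i(\alpha)$ returns a point $y$ with $V_i([0,y])=\alpha$ (leftmost such point), which becomes a cut point; $\mathrm{Eval}_i(y)$ returns $V_i([0,y])$ for a previously obtained cut point $y$. The output allocation must be demarcated by cut points obtained through queries. A protocol runs in $k$ rounds if in each round it issues a set of queries (to any players) chosen depending only on answers from earlier rounds, then receives all answers. *)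

theory Defs
  imports "HOL-Analysis.Analysis"
begin

text \<open>Cake = [0,1]. Player i has density vs i; V_i([0,y]) = integral {0..y} (vs i).\<close>

definition valid_instance :: "nat \<Rightarrow> (nat \<Rightarrow> real \<Rightarrow> real) \<Rightarrow> bool" where
  "valid_instance n vs \<longleftrightarrow>
     (\<forall>i<n. (\<forall>x\<in>{0..1}. 0 \<le> vs i x) \<and> vs i integrable_on {0..1}
            \<and> integral {0..1} (vs i) = 1)"

definition cut_point :: "(real \<Rightarrow> real) \<Rightarrow> real \<Rightarrow> real" where
  "cut_point v \<alpha> = Inf {y \<in> {0..1}. integral {0..y} v = \<alpha>}"

datatype query = Cut nat real | Eval nat real

fun is_cut :: "query \<Rightarrow> bool" where
  "is_cut (Cut _ _) = True"
| "is_cut (Eval _ _) = False"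

fun answer :: "(nat \<Rightarrow> real \<Rightarrow> real) \<Rightarrow> query \<Rightarrow> real" where
  "answer vs (Cut i \<alpha>) = cut_point (vs i) \<alpha>"
| "answer vs (Eval i y) = integral {0..y} (vs i)"

text \<open>A deterministic protocol: a function choosing the queries of the next round from the
  answers of all earlier rounds (a history: list of rounds, each a list of answers), and an
  output function mapping the final history to an interval [fst, snd] per player.\<close>
type_synonym history = "real list list"
type_synonym query_fn = "history \<Rightarrow> query list"
type_synonym output_fn = "history \<Rightarrow> nat \<Rightarrow> real \<times> real"

fun transcript :: "query_fn \<Rightarrow> (query \<Rightarrow> real) \<Rightarrow> nat \<Rightarrow> history" where
  "transcript Q ans 0 = []"
| "transcript Q ans (Suc r) = (let h = transcript Q ans r in h @ [map ans (Q h)])"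

definition cut_points :: "query_fn \<Rightarrow> history \<Rightarrow> real set" where
  "cut_points Q h = {0, 1} \<union>
     (\<Union>j<length h. {y. \<exists>q. (q, y) \<in> set (zip (Q (take j h)) (h ! j)) \<and> is_cut q})"

fun valid_query :: "nat \<Rightarrow> real set \<Rightarrow> query \<Rightarrow> bool" where
  "valid_query n C (Cut i \<alpha>) \<longleftrightarrow> i < n \<and> 0 \<le> \<alpha> \<and> \<alpha> \<le> 1"
| "valid_query n C (Eval i y) \<longleftrightarrow> i < n \<and> y \<in> C"

definition valid_run :: "nat \<Rightarrow> nat \<Rightarrow> query_fn \<Rightarrow> (nat \<Rightarrow> real \<Rightarrow> real) \<Rightarrow> bool" where
  "valid_run n k Q vs \<longleftrightarrow>
     (\<forall>r<k. let h = transcript Q (answer vs) r in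
        \<forall>q\<in>set (Q h). valid_query n (cut_points Q h) q)"

definition num_queries :: "nat \<Rightarrow> query_fn \<Rightarrow> (nat \<Rightarrow> real \<Rightarrow> real) \<Rightarrow> nat" where
  "num_queries k Q vs = (\<Sum>r<k. length (Q (transcript Q (answer vs) r)))"

definition proportional_interval_allocation ::
  "nat \<Rightarrow> (nat \<Rightarrow> real \<Rightarrow> real) \<Rightarrow> real set \<Rightarrow> (nat \<Rightarrow> real \<times> real) \<Rightarrow> bool" where
  "proportional_interval_allocation n vs C A \<longleftrightarrow>
     (\<forall>i<n. fst (A i) \<le> snd (A i) \<and> fst (A i) \<in> C \<and> snd (A i) \<in> C) \<and>
     (\<Union>i<n. {fst (A i)..snd (A i)}) = {0..1} \<and>
     (\<forall>i<n. \<forall>j<n. i \<noteq> j \<longrightarrow> {fst (A i)<..<snd (A i)} \<inter> {fst (A j)<..<snd (A j)} = {}) \<and>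
     (\<forall>i<n. integral {fst (A i)..snd (A i)} (vs i) \<ge> 1 / real n)"

end

theory Submission
  imports Defs
begin

definition VV :: "(real \<Rightarrow> real) \<Rightarrow> real \<Rightarrow> real" where
  "VV v y = integral {0..y} v"

definition good :: "(real \<Rightarrow> real) \<Rightarrow> bool" where
  "good v \<longleftrightarrow> (\<forall>x\<in>{0..1}. 0 \<le> v x) \<and> v integrable_on {0..1} \<and> integral {0..1} v = 1"

lemma good_inst: "valid_instance n vs \<Longrightarrow> i < n \<Longrightarrow> good (vs i)"
  unfolding valid_instance_def good_def by blast

lemma good_int: "good v \<Longrightarrow> 0 \<le> a \<Longrightarrow> b \<le> 1 \<Longrightarrow> v integrable_on {a..b}"
  unfolding good_def by (metis atLeastatMost_subset_iff integrable_on_subinterval order_refl)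

lemma VV_split:
  assumes "good v" "0 \<le> a" "a \<le> b" "b \<le> 1"
  shows "integral {a..b} v = VV v b - VV v a"
proof -
  have i: "v integrable_on {0..b}" using good_int assms by simp
  have "integral {0..a} v + integral {a..b} v = integral {0..b} v"
    using Henstock_Kurzweil_Integration.integral_combine[OF assms(2) assms(3) i] .
  then show ?thesis unfolding VV_def by simp
qed

lemma VV_mono:
  assumes "good v" "0 \<le> a" "a \<le> b" "b \<le> 1"
  shows "VV v a \<le> VV v b"
proof -
  have i: "v integrable_on {a..b}" using good_int assms by simp
  have "\<forall>x\<in>{a..b}. 0 \<le> v x" using assms unfolding good_def by auto
  then have "0 \<le> integral {a..b} v"
    using integral_nonneg[OF i] by blast
  then show ?thesis using VV_split[OF assms] by simp
qed

lemma VV_0[simp]: "VV v 0 = 0" by (simp add: VV_def)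
lemma VV_1: "good v \<Longrightarrow> VV v 1 = 1" by (simp add: VV_def good_def)

lemma VV_cont: "good v \<Longrightarrow> continuous_on {0..1} (VV v)"
  unfolding VV_def good_def using indefinite_integral_continuous_1 by blast

lemma cut_point_props:
  assumes "good v" "0 \<le> \<alpha>" "\<alpha> \<le> 1"
  shows "0 \<le> cut_point v \<alpha> \<and> cut_point v \<alpha> \<le> 1 \<and> VV v (cut_point v \<alpha>) = \<alpha>"
proof -
  let ?S = "{y \<in> {0..1}. integral {0..y} v = \<alpha>}"
  have c: "continuous_on {0..1} (VV v)" using VV_cont[OF assms(1)] .
  obtain x where "0 \<le> x" "x \<le> 1" "VV v x = \<alpha>"
  proof -
    have "VV v 0 \<le> \<alpha>" "\<alpha> \<le> VV v 1" using assms VV_1[OF assms(1)] by auto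
    from IVT'[of "VV v" 0 \<alpha> 1, OF this _ c] obtain x where "0 \<le> x \<and> x \<le> 1 \<and> VV v x = \<alpha>" by auto
    then show ?thesis using that by blast
  qed
  then have ne: "?S \<noteq> {}" by (auto simp: VV_def)
  have "closed {y \<in> {0..1}. VV v y = \<alpha>}"
    by (rule continuous_closed_preimage_constant[OF c]) auto
  then have cl: "closed ?S" by (simp add: VV_def)
  have bb: "bdd_below ?S" by (rule bdd_belowI[of _ 0]) auto
  have "Inf ?S \<in> ?S" using closed_contains_Inf[OF ne bb cl] .
  then have "Inf ?S \<in> {0..1}" "integral {0..Inf ?S} v = \<alpha>" by blast+
  then show ?thesis unfolding cut_point_def VV_def by simp
qed

lemma cut_point_le:
  assumes "good v" "0 \<le> \<alpha>" "\<alpha> \<le> VV v y" "0 \<le> y" "y \<le> 1"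
  shows "cut_point v \<alpha> \<le> y"
proof -
  let ?S = "{y \<in> {0..1}. integral {0..y} v = \<alpha>}"
  have c: "continuous_on {0..y} (VV v)"
    using VV_cont[OF assms(1)] by (rule continuous_on_subset) (use assms in auto)
  have "VV v 0 \<le> \<alpha>" using assms by simp
  from IVT'[of "VV v" 0 \<alpha> y, OF this assms(3) assms(4) c]
  obtain x where x: "0 \<le> x" "x \<le> y" "VV v x = \<alpha>" by blast
  then have "x \<in> ?S" using assms by (auto simp: VV_def)
  moreover have bb: "bdd_below ?S" by (rule bdd_belowI[of _ 0]) auto
  ultimately have "Inf ?S \<le> x" by (rule cInf_lower)
  then show ?thesis unfolding cut_point_def using x by simp
qed


lemma exists_sel:
  fixes f :: "nat \<Rightarrow> real"
  assumes "finite R"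
  shows "c \<le> card R \<Longrightarrow> \<exists>S\<subseteq>R. card S = c \<and> (\<forall>i\<in>S. \<forall>j\<in>R-S. f i \<le> f j)"
proof (induction c)
  case 0
  then show ?case by (intro exI[of _ "{}"]) auto
next
  case (Suc c)
  then obtain S where S: "S \<subseteq> R" "card S = c" "\<forall>i\<in>S. \<forall>j\<in>R-S. f i \<le> f j" by auto
  have fS: "finite S" using S(1) assms finite_subset by blast
  have "R - S \<noteq> {}" using S Suc.prems by auto
  moreover have "finite (R - S)" using assms by simp
  ultimately have "Min (f ` (R - S)) \<in> f ` (R - S)" by simp
  then obtain j0 where j0: "j0 \<in> R - S" "f j0 = Min (f ` (R - S))" by auto
  have mn: "\<forall>j\<in>R-S. f j0 \<le> f j" using j0 \<open>finite (R - S)\<close> by auto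
  show ?case
  proof (intro exI[of _ "insert j0 S"] conjI ballI)
    show "insert j0 S \<subseteq> R" using j0 S by auto
    show "card (insert j0 S) = Suc c" using j0 S fS by simp
    fix i j assume "i \<in> insert j0 S" "j \<in> R - insert j0 S"
    then show "f i \<le> f j" using S(3) mn by auto
  qed
qed

lemma sum_tel:
  fixes f :: "nat \<Rightarrow> nat"
  assumes "\<And>G. f G \<le> f (Suc G)"
  shows "(\<Sum>t<d. f (Suc (a+t)) - f (a+t)) = f (a+d) - f a"
proof (induction d)
  case 0 then show ?case by simp
next
  case (Suc d)
  have "f a \<le> f (a+d)" by (rule lift_Suc_mono_le[of f]) (use assms in auto)
  moreover have "f (a+d) \<le> f (Suc (a+d))" using assms by blast
  ultimately show ?case using Suc by simp
qed

lemma transcript_len[simp]: "length (transcript Q ans r) = r"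
  by (induction r) (auto simp: Let_def)

lemma transcript_take: "r \<le> k \<Longrightarrow> take r (transcript Q ans k) = transcript Q ans r"
  by (induction k) (auto simp: Let_def le_Suc_eq)

lemma transcript_nth: "r < k \<Longrightarrow> transcript Q ans k ! r = map ans (Q (transcript Q ans r))"
proof (induction k)
  case 0 then show ?case by simp
next
  case (Suc k)
  then show ?case by (cases "r = k") (auto simp: Let_def nth_append)
qed

lemma zip_map_self: "q \<in> set qs \<Longrightarrow> (q, f q) \<in> set (zip qs (map f qs))"
  by (induction qs) auto

lemma union_chain:
  fixes b :: "nat \<Rightarrow> real"
  assumes "\<And>j. b j \<le> b (Suc j)"
  shows "(\<Union>G<Suc N. {b G..b (Suc G)}) = {b 0..b (Suc N)}"
proof (induction N)
  case 0 
  have "{..<Suc 0} = {0::nat}" by auto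
  then show ?case by simp
next
  case (Suc N)
  have "b 0 \<le> b (Suc N)" by (rule lift_Suc_mono_le[of b]) (use assms in auto)
  moreover have "b (Suc N) \<le> b (Suc (Suc N))" using assms by blast
  ultimately have "{b 0..b (Suc N)} \<union> {b (Suc N)..b (Suc (Suc N))} = {b 0..b (Suc (Suc N))}"
    by auto
  moreover have "(\<Union>G<Suc (Suc N). {b G..b (Suc G)}) = (\<Union>G<Suc N. {b G..b (Suc G)}) \<union> {b (Suc N)..b (Suc (Suc N))}"
    by (simp add: lessThan_Suc Un_commute)
  ultimately show ?case using Suc by simp
qed

locale proto =
  fixes n m k :: nat
  assumes n1: "1 \<le> n" and m1: "1 \<le> m" and nmk: "n \<le> m ^ k"
begin

definition lvl :: "nat \<Rightarrow> nat \<Rightarrow> nat" where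
  "lvl r G = min n (G * m ^ (k - r))"

definition sz :: "nat \<Rightarrow> nat \<Rightarrow> nat" where
  "sz r G = lvl r (Suc G) - lvl r G"

lemma lvl_mono: "G \<le> G' \<Longrightarrow> lvl r G \<le> lvl r G'"
  unfolding lvl_def by (simp add: min.coboundedI2 mult_le_mono1)

lemma lvl_le: "lvl r G \<le> n"
  unfolding lvl_def by simp

lemma lvl_Suc: "r < k \<Longrightarrow> lvl (Suc r) (G * m) = lvl r G"
proof -
  assume "r < k"
  then have "k - r = Suc (k - Suc r)" by simp
  then have "m ^ (k - r) = m * m ^ (k - Suc r)" by simp
  then show ?thesis unfolding lvl_def by (simp add: mult.assoc)
qed

lemma lvl_k: "lvl k G = min n G"
  unfolding lvl_def by simp

lemma sz_sum: "r < k \<Longrightarrow> (\<Sum>t<m. sz (Suc r) (G * m + t)) = sz r G"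
proof -
  assume r: "r < k"
  have "(\<Sum>t<m. sz (Suc r) (G * m + t)) = (\<Sum>t<m. lvl (Suc r) (Suc (G*m+t)) - lvl (Suc r) (G*m+t))"
    unfolding sz_def by simp
  also have "\<dots> = lvl (Suc r) (G*m+m) - lvl (Suc r) (G*m)"
    by (rule sum_tel) (simp add: lvl_mono)
  also have "G*m+m = Suc G * m" by simp
  finally show ?thesis using lvl_Suc[OF r, of "Suc G"] lvl_Suc[OF r, of G] unfolding sz_def by simp
qed

lemma dm: "t < m \<Longrightarrow> (G * m + t) div m = G \<and> (G * m + t) mod m = t"
  by simp

definition sel :: "(nat \<Rightarrow> nat \<Rightarrow> real) \<Rightarrow> nat set \<Rightarrow> nat \<Rightarrow> nat \<Rightarrow> nat \<Rightarrow> nat set" where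
  "sel x R r G t = (SOME S. S \<subseteq> R \<and> card S = sz (Suc r) (G * m + t) \<and> (\<forall>i\<in>S. \<forall>j\<in>R-S. x i t \<le> x j t))"

primrec Rs :: "(nat \<Rightarrow> nat \<Rightarrow> real) \<Rightarrow> (nat \<Rightarrow> nat) \<Rightarrow> nat \<Rightarrow> nat \<Rightarrow> nat \<Rightarrow> nat set" where
  "Rs x g r G 0 = {i. i < n \<and> g i = G}"
| "Rs x g r G (Suc t) = Rs x g r G t - sel x (Rs x g r G t) r G t"

definition Ss :: "(nat \<Rightarrow> nat \<Rightarrow> real) \<Rightarrow> (nat \<Rightarrow> nat) \<Rightarrow> nat \<Rightarrow> nat \<Rightarrow> nat \<Rightarrow> nat set" where
  "Ss x g r G t = sel x (Rs x g r G t) r G t"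

primrec Bs :: "(nat \<Rightarrow> nat \<Rightarrow> real) \<Rightarrow> (nat \<Rightarrow> nat) \<Rightarrow> (nat \<Rightarrow> real) \<Rightarrow> nat \<Rightarrow> nat \<Rightarrow> nat \<Rightarrow> real" where
  "Bs x g L r G 0 = L G"
| "Bs x g L r G (Suc t) = Max (insert (Bs x g L r G t) ((\<lambda>i. x i t) ` Ss x g r G t))"

definition tix :: "(nat \<Rightarrow> nat \<Rightarrow> real) \<Rightarrow> (nat \<Rightarrow> nat) \<Rightarrow> nat \<Rightarrow> nat \<Rightarrow> nat" where
  "tix x g r i = (LEAST t. i \<in> Ss x g r (g i) t)"

definition refine :: "nat \<Rightarrow> (nat \<Rightarrow> nat \<Rightarrow> real) \<Rightarrow> (nat \<Rightarrow> nat) \<times> (nat \<Rightarrow> real) \<Rightarrow> (nat \<Rightarrow> nat) \<times> (nat \<Rightarrow> real)" where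
  "refine r x st = (\<lambda>i. fst st i * m + tix x (fst st) r i, \<lambda>j. Bs x (fst st) (snd st) r (j div m) (j mod m))"

definition Inv :: "(nat \<Rightarrow> real \<Rightarrow> real) \<Rightarrow> nat \<Rightarrow> real set \<Rightarrow> (nat \<Rightarrow> nat) \<times> (nat \<Rightarrow> real) \<Rightarrow> bool" where
  "Inv vs r C st \<longleftrightarrow> (\<forall>G. card {i. i < n \<and> fst st i = G} = sz r G) \<and>
     (\<forall>i<n. VV (vs i) (snd st (fst st i)) \<le> real (lvl r (fst st i)) / real n \<and>
            real (lvl r (Suc (fst st i))) / real n \<le> VV (vs i) (snd st (Suc (fst st i)))) \<and>
     snd st 0 = 0 \<and> (\<forall>j. snd st j \<le> snd st (Suc j)) \<and> (\<forall>j. 0 \<le> snd st j \<and> snd st j \<le> 1) \<and>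
     (\<forall>j. snd st j \<in> C)"

lemma Inv_mono: "Inv vs r C st \<Longrightarrow> C \<subseteq> C' \<Longrightarrow> Inv vs r C' st"
  unfolding Inv_def by blast

context
  fixes vs r C g L x C'
  assumes vi: "valid_instance n vs" and I: "Inv vs r C (g, L)" and rk: "r < k"
    and hx: "\<forall>i<n. \<forall>t<m. x i t = cut_point (vs i) (real (lvl (Suc r) (Suc (g i * m + t))) / real n)"
    and hxC: "\<forall>i<n. \<forall>t<m. x i t \<in> C'" and CC: "C \<subseteq> C'"
begin

lemma I1: "card {i. i < n \<and> g i = G} = sz r G"
  using I unfolding Inv_def by simp

lemma Rs_sub0: "Rs x g r G t \<subseteq> Rs x g r G 0"
  by (induction t) auto

lemma Rs_card: "t \<le> m \<Longrightarrow> finite (Rs x g r G t) \<and> card (Rs x g r G t) + (\<Sum>t'<t. sz (Suc r) (G*m+t')) = sz r G"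
proof (induction t)
  case 0
  then show ?case using I1 by simp
next
  case (Suc t)
  then have IH: "finite (Rs x g r G t)" "card (Rs x g r G t) + (\<Sum>t'<t. sz (Suc r) (G*m+t')) = sz r G"
    and tm: "t < m" by auto
  have "(\<Sum>t'<Suc t. sz (Suc r) (G*m+t')) \<le> (\<Sum>t'<m. sz (Suc r) (G*m+t'))"
    by (rule sum_mono2) (use tm in auto)
  then have le: "sz (Suc r) (G*m+t) \<le> card (Rs x g r G t)" using IH sz_sum[OF rk, of G] by simp
  obtain S where S: "S \<subseteq> Rs x g r G t" "card S = sz (Suc r) (G*m+t)"
      "\<forall>i\<in>S. \<forall>j\<in>Rs x g r G t - S. x i t \<le> x j t"
    using exists_sel[OF IH(1) le, of "\<lambda>i. x i t"] by blast
  let ?P = "\<lambda>S. S \<subseteq> Rs x g r G t \<and> card S = sz (Suc r) (G*m+t) \<and> (\<forall>i\<in>S. \<forall>j\<in>Rs x g r G t - S. x i t \<le> x j t)"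
  have "?P (sel x (Rs x g r G t) r G t)" unfolding sel_def by (rule someI[of ?P S]) (use S in blast)
  then have "card (Rs x g r G (Suc t)) = card (Rs x g r G t) - sz (Suc r) (G*m+t)"
    using IH(1) card_Diff_subset[of "sel x (Rs x g r G t) r G t" "Rs x g r G t"] finite_subset
    by (metis Rs.simps(2))
  then show ?case using IH le by simp
qed

lemma sz_le: "t < m \<Longrightarrow> sz (Suc r) (G*m+t) \<le> card (Rs x g r G t)"
proof -
  assume tm: "t < m"
  have "(\<Sum>t'<Suc t. sz (Suc r) (G*m+t')) \<le> (\<Sum>t'<m. sz (Suc r) (G*m+t'))"
    by (rule sum_mono2) (use tm in auto)
  moreover have "card (Rs x g r G t) + (\<Sum>t'<t. sz (Suc r) (G*m+t')) = sz r G"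
    using Rs_card tm by simp
  ultimately show ?thesis using sz_sum[OF rk, of G] by simp
qed

lemma Ss_spec: "t < m \<Longrightarrow> Ss x g r G t \<subseteq> Rs x g r G t \<and> card (Ss x g r G t) = sz (Suc r) (G*m+t) \<and>
   (\<forall>i\<in>Ss x g r G t. \<forall>j\<in>Rs x g r G t - Ss x g r G t. x i t \<le> x j t)"
proof -
  assume tm: "t < m"
  have f: "finite (Rs x g r G t)" using Rs_card tm by simp
  obtain S where S: "S \<subseteq> Rs x g r G t" "card S = sz (Suc r) (G*m+t)"
      "\<forall>i\<in>S. \<forall>j\<in>Rs x g r G t - S. x i t \<le> x j t"
    using exists_sel[OF f sz_le[OF tm], of "\<lambda>i. x i t"] by blast
  let ?P = "\<lambda>S. S \<subseteq> Rs x g r G t \<and> card S = sz (Suc r) (G*m+t) \<and> (\<forall>i\<in>S. \<forall>j\<in>Rs x g r G t - S. x i t \<le> x j t)"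
  have "?P (sel x (Rs x g r G t) r G t)" unfolding sel_def by (rule someI[of ?P S]) (use S in blast)
  then show ?thesis unfolding Ss_def .
qed

lemma Rs_fin: "finite (Rs x g r G t)"
  using Rs_sub0[of G t] by (rule finite_subset) simp

lemma Rs_anti: "t \<le> t' \<Longrightarrow> Rs x g r G t' \<subseteq> Rs x g r G t"
  by (induction t' rule: dec_induct) auto

lemma Rs_m: "Rs x g r G m = {}"
proof -
  have "finite (Rs x g r G m)" "card (Rs x g r G m) + (\<Sum>t'<m. sz (Suc r) (G*m+t')) = sz r G"
    using Rs_card by auto
  then show ?thesis using sz_sum[OF rk, of G] by simp
qed

lemma Ss_exists_aux: "i \<in> Rs x g r G 0 \<Longrightarrow> i \<notin> Rs x g r G t' \<Longrightarrow> \<exists>t<t'. i \<in> Ss x g r G t"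
proof (induction t')
  case 0 then show ?case by simp
next
  case (Suc t')
  then show ?case unfolding Ss_def by (cases "i \<in> Rs x g r G t'") (auto intro: less_SucI)
qed

lemma Ss_exists: "i \<in> Rs x g r G 0 \<Longrightarrow> \<exists>t<m. i \<in> Ss x g r G t"
  using Ss_exists_aux[where t'=m] Rs_m by blast

lemma Ss_disj: "t < t' \<Longrightarrow> t' < m \<Longrightarrow> i \<in> Ss x g r G t \<Longrightarrow> i \<notin> Ss x g r G t'"
proof
  assume a: "t < t'" "t' < m" "i \<in> Ss x g r G t" "i \<in> Ss x g r G t'"
  have "Ss x g r G t' \<subseteq> Rs x g r G t'" using Ss_spec[OF a(2)] by blast
  also have "\<dots> \<subseteq> Rs x g r G (Suc t)" using Rs_anti a by (simp del: Rs.simps)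
  finally show False using a unfolding Ss_def by auto
qed

lemma Ss_sub0: "t < m \<Longrightarrow> Ss x g r G t \<subseteq> Rs x g r G 0"
  using Ss_spec Rs_sub0 by blast

lemma tix_eq: "i \<in> Ss x g r G t \<Longrightarrow> t < m \<Longrightarrow> g i = G \<Longrightarrow> tix x g r i = t"
  unfolding tix_def
proof (rule Least_equality)
  assume a: "i \<in> Ss x g r G t" "t < m" "g i = G"
  then show "i \<in> Ss x g r (g i) t" by simp
  fix t' assume "i \<in> Ss x g r (g i) t'"
  then show "t \<le> t'" using a Ss_disj[of t' t i] by (cases "t' < t") auto
qed

lemma Lmono: "L j \<le> L (Suc j)" and L01: "0 \<le> L j" "L j \<le> 1" and LC: "L j \<in> C" and L0: "L 0 = 0"
  using I unfolding Inv_def by auto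

lemma I2: "i < n \<Longrightarrow> VV (vs i) (L (g i)) \<le> real (lvl r (g i)) / real n"
  "i < n \<Longrightarrow> real (lvl r (Suc (g i))) / real n \<le> VV (vs i) (L (Suc (g i)))"
  using I unfolding Inv_def by auto

lemma alpha01: "0 \<le> real (lvl q G') / real n" "real (lvl q G') / real n \<le> 1"
  using lvl_le[of q G'] n1 by (auto simp: field_simps)

lemma x_props:
  assumes "i \<in> Rs x g r G 0" "t < m"
  shows "0 \<le> x i t \<and> x i t \<le> 1 \<and> VV (vs i) (x i t) = real (lvl (Suc r) (Suc (G*m+t))) / real n
     \<and> x i t \<le> L (Suc G) \<and> i < n \<and> g i = G"
proof -
  have i: "i < n" "g i = G" using assms by auto
  have gd: "good (vs i)" using good_inst[OF vi i(1)] .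
  have xe: "x i t = cut_point (vs i) (real (lvl (Suc r) (Suc (G*m+t))) / real n)"
    using hx i assms(2) by simp
  have cp: "0 \<le> x i t \<and> x i t \<le> 1 \<and> VV (vs i) (x i t) = real (lvl (Suc r) (Suc (G*m+t))) / real n"
    unfolding xe by (rule cut_point_props[OF gd alpha01])
  have "lvl (Suc r) (Suc (G*m+t)) \<le> lvl (Suc r) (Suc G * m)"
    by (rule lvl_mono) (use assms(2) in simp)
  then have "lvl (Suc r) (Suc (G*m+t)) \<le> lvl r (Suc G)" using lvl_Suc[OF rk, of "Suc G"] by simp
  then have "real (lvl (Suc r) (Suc (G*m+t))) / real n \<le> VV (vs i) (L (Suc G))"
    using I2(2)[OF i(1)] i(2) n1 by (smt (verit) divide_right_mono of_nat_0_le_iff of_nat_mono)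
  then have "x i t \<le> L (Suc G)" unfolding xe
    by (rule cut_point_le[OF gd alpha01(1)]) (use L01 in auto)
  then show ?thesis using cp i by simp
qed

lemma Bs_props: "t \<le> m \<Longrightarrow> L G \<le> Bs x g L r G t \<and> Bs x g L r G t \<le> L (Suc G) \<and> Bs x g L r G t \<in> C' \<and>
   (\<forall>j\<in>Rs x g r G t. VV (vs j) (Bs x g L r G t) \<le> real (lvl (Suc r) (G*m+t)) / real n)"
proof (induction t)
  case 0
  have "\<forall>j\<in>Rs x g r G 0. VV (vs j) (L G) \<le> real (lvl (Suc r) (G*m)) / real n"
    using I2(1) lvl_Suc[OF rk, of G] by auto
  then show ?case using Lmono LC CC by auto
next
  case (Suc t)
  then have tm: "t < m" by simp
  have IH: "L G \<le> Bs x g L r G t" "Bs x g L r G t \<le> L (Suc G)" "Bs x g L r G t \<in> C'"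
    "\<forall>j\<in>Rs x g r G t. VV (vs j) (Bs x g L r G t) \<le> real (lvl (Suc r) (G*m+t)) / real n"
    using Suc by auto
  let ?B = "Bs x g L r G t" and ?S = "Ss x g r G t"
  let ?a = "real (lvl (Suc r) (Suc (G*m+t))) / real n"
  have sp: "?S \<subseteq> Rs x g r G t" "\<forall>i\<in>?S. \<forall>j\<in>Rs x g r G t - ?S. x i t \<le> x j t"
    using Ss_spec[OF tm] by auto
  have fS: "finite ?S" using sp(1) Rs_fin finite_subset by blast
  have S0: "?S \<subseteq> Rs x g r G 0" using Ss_sub0[OF tm] .
  have RsS: "Rs x g r G (Suc t) = Rs x g r G t - ?S" unfolding Ss_def by simp
  have mono_a: "real (lvl (Suc r) (G*m+t)) / real n \<le> ?a"
    using lvl_mono[of "G*m+t" "Suc (G*m+t)" "Suc r"] n1 by (simp add: divide_right_mono)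
  define M where "M = Max (insert ?B ((\<lambda>i. x i t) ` ?S))"
  have BM: "Bs x g L r G (Suc t) = M" unfolding M_def by simp
  have "M \<in> insert ?B ((\<lambda>i. x i t) ` ?S)" unfolding M_def using fS by (intro Max_in) auto
  moreover have "?B \<le> M" unfolding M_def using fS by (intro Max_ge) auto
  ultimately consider "M = ?B" | i where "i \<in> ?S" "M = x i t" by auto
  then show ?case
  proof cases
    case 1
    have "\<forall>j\<in>Rs x g r G (Suc t). VV (vs j) ?B \<le> ?a"
      using IH(4) mono_a RsS by fastforce
    then show ?thesis using 1 BM IH by simp
  next
    case 2
    have xi: "0 \<le> x i t" "x i t \<le> L (Suc G)" "i < n"
      using x_props[of i G t] 2 S0 tm by auto
    have "\<forall>j\<in>Rs x g r G (Suc t). VV (vs j) (x i t) \<le> ?a"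
    proof
      fix j assume j: "j \<in> Rs x g r G (Suc t)"
      then have j0: "j \<in> Rs x g r G t - ?S" using RsS by (simp del: Rs.simps)
      then have "x i t \<le> x j t" using sp(2) 2 by blast
      moreover have "x j t \<le> 1" "VV (vs j) (x j t) = ?a" "j < n"
        using x_props[of j G t] j0 Rs_sub0 tm by auto
      ultimately show "VV (vs j) (x i t) \<le> ?a"
        using VV_mono[OF good_inst[OF vi, of j] xi(1)] by force
    qed
    moreover have "x i t \<in> C'" using hxC xi tm by auto
    moreover have "L G \<le> x i t" using IH(1) \<open>?B \<le> M\<close> 2 by simp
    ultimately show ?thesis using 2 BM xi by simp
  qed
qed

lemma Bs_step: "t < m \<Longrightarrow> Bs x g L r G t \<le> Bs x g L r G (Suc t)"
proof -
  assume tm: "t < m"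
  have "finite (Ss x g r G t)" using Ss_spec[OF tm] Rs_fin finite_subset by blast
  then show ?thesis by (simp add: Max_ge)
qed

lemma Bs_right: "t < m \<Longrightarrow> i \<in> Ss x g r G t \<Longrightarrow>
   real (lvl (Suc r) (Suc (G*m+t))) / real n \<le> VV (vs i) (Bs x g L r G (Suc t))"
proof -
  assume tm: "t < m" and iS: "i \<in> Ss x g r G t"
  have fS: "finite (Ss x g r G t)" using Ss_spec[OF tm] Rs_fin finite_subset by blast
  have le: "x i t \<le> Bs x g L r G (Suc t)" using fS iS by (simp add: Max_ge)
  have xp: "0 \<le> x i t" "VV (vs i) (x i t) = real (lvl (Suc r) (Suc (G*m+t))) / real n" "i < n"
    using x_props[of i G t] Ss_sub0[OF tm] iS tm by auto
  have "Bs x g L r G (Suc t) \<le> 1" using Bs_props[of "Suc t" G] tm L01[of "Suc G"] by simp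
  then show ?thesis using VV_mono[OF good_inst[OF vi xp(3)] xp(1) le] xp(2) by simp
qed

lemma gi: "i < n \<Longrightarrow> \<exists>t<m. i \<in> Ss x g r (g i) t \<and> tix x g r i = t"
proof -
  assume i: "i < n"
  then have "i \<in> Rs x g r (g i) 0" by simp
  then obtain t where t: "t < m" "i \<in> Ss x g r (g i) t" using Ss_exists by blast
  then show ?thesis using tix_eq[OF t(2) t(1)] by auto
qed

lemma step: "Inv vs (Suc r) C' (refine r x (g, L))"
proof -
  define g' where "g' = (\<lambda>i. g i * m + tix x g r i)"
  define L' where "L' = (\<lambda>j. Bs x g L r (j div m) (j mod m))"
  have rf: "refine r x (g, L) = (g', L')" unfolding refine_def g'_def L'_def by simp
  have m0: "0 < m" using m1 by simp
  have I1': "card {i. i < n \<and> g' i = J} = sz (Suc r) J" for J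
  proof -
    define G where "G = J div m"
    define t where "t = J mod m"
    have tm: "t < m" unfolding t_def using m0 by simp
    have J: "J = G * m + t" unfolding G_def t_def by simp
    have "{i. i < n \<and> g' i = J} = Ss x g r G t"
    proof (intro set_eqI iffI)
      fix i assume "i \<in> {i. i < n \<and> g' i = J}"
      then have i: "i < n" "g' i = J" by auto
      obtain t' where t': "t' < m" "i \<in> Ss x g r (g i) t'" "tix x g r i = t'" using gi[OF i(1)] by blast
      have "g i * m + t' = G * m + t" using i(2) t' J unfolding g'_def by simp
      then have "g i = G \<and> t' = t" using dm[OF t'(1), of "g i"] dm[OF tm, of G] by metis
      then show "i \<in> Ss x g r G t" using t' by simp
    next
      fix i assume iS: "i \<in> Ss x g r G t"
      then have "i \<in> Rs x g r G 0" using Ss_sub0[OF tm] by blast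
      then have i: "i < n" "g i = G" by auto
      have "tix x g r i = t" using tix_eq[OF iS tm i(2)] .
      then show "i \<in> {i. i < n \<and> g' i = J}" using i J unfolding g'_def by simp
    qed
    then show ?thesis using Ss_spec[OF tm, of G] J by simp
  qed
  have I2': "VV (vs i) (L' (g' i)) \<le> real (lvl (Suc r) (g' i)) / real n \<and>
       real (lvl (Suc r) (Suc (g' i))) / real n \<le> VV (vs i) (L' (Suc (g' i)))" if i: "i < n" for i
  proof -
    obtain t where t: "t < m" "i \<in> Ss x g r (g i) t" "tix x g r i = t" using gi[OF i] by blast
    define G where "G = g i"
    have g'i: "g' i = G * m + t" unfolding g'_def G_def using t by simp
    have iR: "i \<in> Rs x g r G t" using Ss_spec[OF t(1), of G] t(2) unfolding G_def by blast
    have left: "VV (vs i) (L' (g' i)) \<le> real (lvl (Suc r) (g' i)) / real n"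
      using Bs_props[of t G] t(1) iR dm[OF t(1), of G] unfolding g'i L'_def by simp
    have right: "real (lvl (Suc r) (Suc (g' i))) / real n \<le> VV (vs i) (L' (Suc (g' i)))"
    proof (cases "Suc t < m")
      case True
      have "L' (Suc (g' i)) = Bs x g L r G (Suc t)"
        using dm[OF True, of G] unfolding g'i L'_def by simp
      then show ?thesis using Bs_right[OF t(1)] t(2) unfolding g'i G_def by simp
    next
      case False
      then have sm: "Suc t = m" using t by simp
      then have e: "Suc (g' i) = Suc G * m" unfolding g'i by simp
      have "L' (Suc (g' i)) = L (Suc G)"
        unfolding e L'_def using m0 by simp
      moreover have "lvl (Suc r) (Suc (g' i)) = lvl r (Suc G)" unfolding e by (rule lvl_Suc[OF rk])
      ultimately show ?thesis using I2(2)[OF i] unfolding G_def by simp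
    qed
    show ?thesis using left right by simp
  qed
  have L'mono: "L' j \<le> L' (Suc j)" for j
  proof -
    define G where "G = j div m"
    define t where "t = j mod m"
    have tm: "t < m" unfolding t_def using m0 by simp
    have J: "j = G * m + t" unfolding G_def t_def by simp
    show ?thesis
    proof (cases "Suc t < m")
      case True
      have "L' (Suc j) = Bs x g L r G (Suc t)" "L' j = Bs x g L r G t"
        using dm[OF True, of G] dm[OF tm, of G] unfolding J L'_def by simp_all
      then show ?thesis using Bs_step[OF tm] by simp
    next
      case False
      then have "Suc j = Suc G * m" using tm J by simp
      then have "L' (Suc j) = L (Suc G)" unfolding L'_def using m0 by simp
      moreover have "L' j = Bs x g L r G t" using dm[OF tm, of G] unfolding J L'_def by simp
      ultimately show ?thesis using Bs_props[of t G] tm by simp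
    qed
  qed
  have L'01: "0 \<le> L' j \<and> L' j \<le> 1 \<and> L' j \<in> C'" for j
  proof -
    have "j mod m \<le> m" using m0 by (simp add: less_imp_le)
    then show ?thesis unfolding L'_def using Bs_props[of "j mod m" "j div m"]
        L01[of "j div m"] L01[of "Suc (j div m)"] by force
  qed
  have "L' 0 = 0" unfolding L'_def using L0 by simp
  then show ?thesis unfolding rf Inv_def using I1' I2' L'mono L'01 by simp
qed

end

end

context proto
begin

primrec stf :: "nat \<Rightarrow> history \<Rightarrow> (nat \<Rightarrow> nat) \<times> (nat \<Rightarrow> real)" where
  "stf 0 h = (\<lambda>i. 0, \<lambda>j. if j = 0 then 0 else 1)"
| "stf (Suc r) h = refine r (\<lambda>i t. (h ! r) ! (i * m + t)) (stf r h)"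

definition Qp :: query_fn where
  "Qp h = map (\<lambda>p. Cut (p div m)
     (real (lvl (Suc (length h)) (Suc (fst (stf (length h) h) (p div m) * m + p mod m))) / real n)) [0..<n*m]"

definition bnd :: "history \<Rightarrow> nat \<Rightarrow> real" where
  "bnd h j = (if n \<le> j then 1 else snd (stf k h) j)"

definition Outp :: output_fn where
  "Outp h i = (bnd h (fst (stf k h) i), bnd h (Suc (fst (stf k h) i)))"

lemma alpha_ok: "0 \<le> real (lvl q G') / real n \<and> real (lvl q G') / real n \<le> 1"
  using lvl_le[of q G'] n1 by (auto simp: field_simps)

lemma idx_lt: "i < n \<Longrightarrow> t < m \<Longrightarrow> i * m + t < n * m"
proof -
  assume "i < n" "t < m"
  then have "i * m + t < i * m + m" by simp
  also have "\<dots> = Suc i * m" by simp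
  also have "\<dots> \<le> n * m" using \<open>i < n\<close> by (intro mult_le_mono1) simp
  finally show ?thesis .
qed

lemma stf_cong: "(\<forall>j<r. h ! j = h' ! j) \<Longrightarrow> stf r h = stf r h'"
  by (induction r) auto

lemma Qp_len[simp]: "length (Qp h) = n * m"
  unfolding Qp_def by simp

lemma Qp_nth: "p < n * m \<Longrightarrow> Qp h ! p = Cut (p div m)
     (real (lvl (Suc (length h)) (Suc (fst (stf (length h) h) (p div m) * m + p mod m))) / real n)"
  unfolding Qp_def by simp

lemma Qp_cut: "q \<in> set (Qp h) \<Longrightarrow> is_cut q"
  unfolding Qp_def by auto

lemma Qp_valid: "q \<in> set (Qp h) \<Longrightarrow> valid_query n C q"
proof -
  assume "q \<in> set (Qp h)"
  then obtain p where p: "p < n * m" "q = Cut (p div m)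
     (real (lvl (Suc (length h)) (Suc (fst (stf (length h) h) (p div m) * m + p mod m))) / real n)"
    unfolding Qp_def by auto
  have "p div m < n" using p(1) by (simp add: less_mult_imp_div_less)
  then show ?thesis using p(2) alpha_ok by simp
qed

lemma Inv0: "valid_instance n vs \<Longrightarrow> Inv vs 0 {0,1} (stf 0 h)"
proof -
  assume vi: "valid_instance n vs"
  have l0: "lvl 0 G = (if G = 0 then 0 else n)" for G
  proof (cases "G = 0")
    case True then show ?thesis unfolding lvl_def by simp
  next
    case False
    then have "m ^ k \<le> G * m ^ k" by simp
    then have "n \<le> G * m ^ k" using nmk by linarith
    then show ?thesis using False unfolding lvl_def by simp
  qed
  have c: "card {i. i < n \<and> (0::nat) = G} = sz 0 G" for G
  proof (cases "G = 0")
    case True then show ?thesis unfolding sz_def l0 by simp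
  next
    case False then show ?thesis unfolding sz_def l0 by simp
  qed
  have v: "\<forall>i<n. VV (vs i) 0 \<le> real (lvl 0 0) / real n \<and> real (lvl 0 1) / real n \<le> VV (vs i) 1"
  proof (intro allI impI conjI)
    fix i assume i: "i < n"
    show "VV (vs i) 0 \<le> real (lvl 0 0) / real n" unfolding l0 by simp
    show "real (lvl 0 1) / real n \<le> VV (vs i) 1"
      unfolding l0 VV_1[OF good_inst[OF vi i]] using n1 by simp
  qed
  have st: "stf 0 h = (\<lambda>i. 0, \<lambda>j. if j = 0 then 0 else 1)" by simp
  show ?thesis unfolding Inv_def st fst_conv snd_conv
  proof (intro conjI allI)
    show "card {i. i < n \<and> (0::nat) = G} = sz 0 G" for G using c .
  qed (use v in auto)
qed

lemma main_inv:
  assumes vi: "valid_instance n vs"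
  shows "r \<le> k \<Longrightarrow> Inv vs r ({0,1} \<union> (\<Union>j<r. set (transcript Qp (answer vs) k ! j))) (stf r (transcript Qp (answer vs) k))"
proof (induction r)
  case 0
  then show ?case using Inv0[OF vi] by simp
next
  case (Suc r)
  define H where "H = transcript Qp (answer vs) k"
  have rk: "r < k" using Suc by simp
  define C where "C = {0,1} \<union> (\<Union>j<r. set (H ! j))"
  obtain g L where st: "stf r H = (g, L)" by (cases "stf r H")
  have I: "Inv vs r C (g, L)" using Suc rk st unfolding C_def H_def by simp
  define x where "x = (\<lambda>i t. (H ! r) ! (i * m + t))"
  have Hr: "H ! r = map (answer vs) (Qp (transcript Qp (answer vs) r))"
    unfolding H_def by (rule transcript_nth[OF rk])
  have tk: "take r H = transcript Qp (answer vs) r" unfolding H_def by (rule transcript_take) (use rk in simp)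
  have st': "stf r (transcript Qp (answer vs) r) = (g, L)"
  proof -
    have "\<forall>j<r. H ! j = take r H ! j" by simp
    then show ?thesis using st stf_cong[of r H "take r H"] tk by simp
  qed
  have hx: "\<forall>i<n. \<forall>t<m. x i t = cut_point (vs i) (real (lvl (Suc r) (Suc (g i * m + t))) / real n)"
  proof (intro allI impI)
    fix i t assume i: "i < n" and t: "t < m"
    have p: "i * m + t < n * m" using idx_lt[OF i t] .
    show "x i t = cut_point (vs i) (real (lvl (Suc r) (Suc (g i * m + t))) / real n)"
    proof -
      have "x i t = answer vs (Qp (transcript Qp (answer vs) r) ! (i * m + t))"
        unfolding x_def Hr using p by simp
      also have "\<dots> = cut_point (vs i) (real (lvl (Suc r) (Suc (g i * m + t))) / real n)"
        unfolding Qp_nth[OF p] using dm[OF t, of i] st' by simp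
      finally show ?thesis .
    qed
  qed
  have hxC: "\<forall>i<n. \<forall>t<m. x i t \<in> C \<union> set (H ! r)"
  proof (intro allI impI)
    fix i t assume i: "i < n" and t: "t < m"
    have p: "i * m + t < length (H ! r)" using idx_lt[OF i t] unfolding Hr by simp
    show "x i t \<in> C \<union> set (H ! r)" unfolding x_def using nth_mem[OF p] by simp
  qed
  have "Inv vs (Suc r) (C \<union> set (H ! r)) (refine r x (g, L))"
    by (rule step[OF vi I rk hx hxC]) simp
  moreover have "stf (Suc r) H = refine r x (g, L)" using st unfolding x_def by simp
  moreover have "C \<union> set (H ! r) = {0,1} \<union> (\<Union>j<Suc r. set (H ! j))"
    unfolding C_def by (auto simp: lessThan_Suc)
  ultimately show ?case unfolding H_def by simp
qed

end

context proto
begin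

lemma final:
  fixes b :: "nat \<Rightarrow> real"
  assumes vi: "valid_instance n vs" and I: "Inv vs k C (g, L)" and C0: "0 \<in> C" and C1: "1 \<in> C"
    and b_def: "b = (\<lambda>j. if n \<le> j then 1 else L j)"
  shows "proportional_interval_allocation n vs C (\<lambda>i. (b (g i), b (Suc (g i))))"
proof -
  have sk: "sz k G = (if G < n then 1 else 0)" for G
    unfolding sz_def lvl_k by auto
  have cd: "card {i. i < n \<and> g i = G} = (if G < n then 1 else 0)" for G
    using I sk unfolding Inv_def by simp
  have Lm: "L j \<le> L (Suc j)" "0 \<le> L j" "L j \<le> 1" "L j \<in> C" "L 0 = 0" for j
    using I unfolding Inv_def by auto
  have I2: "VV (vs i) (L (g i)) \<le> real (lvl k (g i)) / real n"
    "real (lvl k (Suc (g i))) / real n \<le> VV (vs i) (L (Suc (g i)))" if "i < n" for i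
    using I that unfolding Inv_def by auto
  have gl: "g i < n" if i: "i < n" for i
  proof (rule ccontr)
    assume "\<not> g i < n"
    then have "card {i'. i' < n \<and> g i' = g i} = 0" using cd by simp
    moreover have "i \<in> {i'. i' < n \<and> g i' = g i}" using i by simp
    moreover have "finite {i'. i' < n \<and> g i' = g i}" by simp
    ultimately show False by (metis card_0_eq empty_iff)
  qed
  have ginj: "i = j" if "i < n" "j < n" "g i = g j" for i j
  proof -
    have "card {i'. i' < n \<and> g i' = g i} = 1" using cd gl[OF that(1)] by simp
    then obtain a where a: "{i'. i' < n \<and> g i' = g i} = {a}" by (rule card_1_singletonE)
    have "i \<in> {a}" "j \<in> {a}" using that by (auto simp flip: a)
    then show ?thesis by simp
  qed
  have gsurj: "\<exists>i<n. g i = G" if "G < n" for G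
  proof -
    have "card {i'. i' < n \<and> g i' = G} = 1" using cd that by simp
    then obtain a where "{i'. i' < n \<and> g i' = G} = {a}" by (rule card_1_singletonE)
    then have "a < n \<and> g a = G" by blast
    then show ?thesis by blast
  qed
  have bm: "b j \<le> b (Suc j)" for j
    unfolding b_def using Lm(1)[of j] Lm(3)[of j] by auto
  have b01: "0 \<le> b j \<and> b j \<le> 1 \<and> b j \<in> C" for j
    unfolding b_def using Lm(2,3,4)[of j] C1 by auto
  have b0: "b 0 = 0" unfolding b_def using n1 Lm(5) by simp
  have bn: "b n = 1" unfolding b_def by simp
  have bmono: "b i \<le> b j" if "i \<le> j" for i j
    by (rule lift_Suc_mono_le[of b]) (use bm that in auto)
  have c1: "\<forall>i<n. b (g i) \<le> b (Suc (g i)) \<and> b (g i) \<in> C \<and> b (Suc (g i)) \<in> C"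
    using bm b01 by auto
  have "(\<Union>i<n. {b (g i)..b (Suc (g i))}) = (\<Union>G<n. {b G..b (Suc G)})"
  proof (intro set_eqI iffI)
    fix y assume "y \<in> (\<Union>i<n. {b (g i)..b (Suc (g i))})"
    then obtain i where "i < n" "y \<in> {b (g i)..b (Suc (g i))}" by auto
    then show "y \<in> (\<Union>G<n. {b G..b (Suc G)})" using gl by auto
  next
    fix y assume "y \<in> (\<Union>G<n. {b G..b (Suc G)})"
    then obtain G where G: "G < n" "y \<in> {b G..b (Suc G)}" by auto
    then obtain i where "i < n" "g i = G" using gsurj by blast
    then show "y \<in> (\<Union>i<n. {b (g i)..b (Suc (g i))})" using G by auto
  qed
  also have "\<dots> = {b 0..b n}"
    using union_chain[of b "n - 1", OF bm] n1 by simp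
  finally have c2: "(\<Union>i<n. {b (g i)..b (Suc (g i))}) = {0..1}" using b0 bn by simp
  have c3: "{b (g i)<..<b (Suc (g i))} \<inter> {b (g j)<..<b (Suc (g j))} = {}"
    if "i < n" "j < n" "i \<noteq> j" for i j
  proof -
    have ne: "g i \<noteq> g j" using ginj that by blast
    show ?thesis
    proof (cases "g i < g j")
      case True
      then have "b (Suc (g i)) \<le> b (g j)" using bmono by simp
      then show ?thesis by auto
    next
      case False
      then have "b (Suc (g j)) \<le> b (g i)" using bmono ne by simp
      then show ?thesis by auto
    qed
  qed
  have c4: "1 / real n \<le> integral {b (g i)..b (Suc (g i))} (vs i)" if i: "i < n" for i
  proof -
    define G where "G = g i"
    have G: "G < n" unfolding G_def using gl[OF i] .
    have gd: "good (vs i)" using good_inst[OF vi i] .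
    have eq: "integral {b G..b (Suc G)} (vs i) = VV (vs i) (b (Suc G)) - VV (vs i) (b G)"
      by (rule VV_split[OF gd]) (use b01 bm in auto)
    have left: "VV (vs i) (b G) \<le> real G / real n"
      using I2(1)[OF i] G unfolding b_def G_def lvl_k by simp
    have right: "real (Suc G) / real n \<le> VV (vs i) (b (Suc G))"
    proof (cases "n \<le> Suc G")
      case True
      then have "Suc G = n" using G by simp
      then show ?thesis unfolding b_def using VV_1[OF gd] n1 by simp
    next
      case False
      then show ?thesis using I2(2)[OF i] unfolding b_def G_def lvl_k by simp
    qed
    have "real (Suc G) / real n - real G / real n = 1 / real n"
      by (simp add: diff_divide_distrib[symmetric])
    then show ?thesis using eq left right unfolding G_def by linarith
  qed
  show ?thesis unfolding proportional_interval_allocation_def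
    using c1 c2 c3 c4 by simp
qed

end

theorem proposition14:
  shows "\<exists>C::real. \<forall>n k::nat. 1 \<le> n \<longrightarrow> 1 \<le> k \<longrightarrow>
    (\<exists>(Q::query_fn) (Out::output_fn). \<forall>vs. valid_instance n vs \<longrightarrow>
       (let h = transcript Q (answer vs) k in
          valid_run n k Q vs \<and>
          real (num_queries k Q vs) \<le> C * real k * real n powr (1 + 1 / real k) \<and>
          proportional_interval_allocation n vs (cut_points Q h) (Out h)))"
proof (intro exI[of _ 2] allI impI)
  fix n k :: nat
  assume n1: "1 \<le> n" and k1: "1 \<le> k"
  define p where "p = real n powr (1 / real k)"
  have p1: "1 \<le> p" unfolding p_def using n1 by (intro ge_one_powr_ge_zero) auto
  define m where "m = nat \<lceil>p\<rceil>"
  have mr: "real m = real_of_int \<lceil>p\<rceil>" unfolding m_def using p1 by simp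
  have mp: "p \<le> real m" "real m \<le> 2 * p" using mr p1 by linarith+
  have m1: "1 \<le> m" using mp p1 by simp
  have "p ^ k = real n"
  proof -
    have "p ^ k = p powr real k" using p1 by (simp add: powr_realpow)
    also have "\<dots> = real n powr (1 / real k * real k)" unfolding p_def by (simp add: powr_powr)
    also have "\<dots> = real n" using k1 n1 by simp
    finally show ?thesis .
  qed
  moreover have "p ^ k \<le> real m ^ k" using mp p1 by (intro power_mono) auto
  ultimately have "real n \<le> real (m ^ k)" by simp
  then have nmk: "n \<le> m ^ k" by linarith
  interpret proto n m k using n1 m1 nmk by unfold_locales
  show "\<exists>(Q::query_fn) (Out::output_fn). \<forall>vs. valid_instance n vs \<longrightarrow>
       (let h = transcript Q (answer vs) k in
          valid_run n k Q vs \<and>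
          real (num_queries k Q vs) \<le> 2 * real k * real n powr (1 + 1 / real k) \<and>
          proportional_interval_allocation n vs (cut_points Q h) (Out h))"
  proof (intro exI[of _ Qp] exI[of _ Outp] allI impI)
    fix vs assume vi: "valid_instance n vs"
    define H where "H = transcript Qp (answer vs) k"
    have vr: "valid_run n k Qp vs"
      unfolding valid_run_def Let_def using Qp_valid by blast
    have nq: "num_queries k Qp vs = k * (n * m)"
      unfolding num_queries_def by simp
    have pw: "real n powr (1 + 1 / real k) = real n * p"
      unfolding p_def using n1 by (simp add: powr_add)
    have "real (k * (n * m)) = real k * real n * real m" by simp
    also have "\<dots> \<le> real k * real n * (2 * p)" using mp by (intro mult_left_mono) auto
    also have "\<dots> = 2 * real k * real n powr (1 + 1 / real k)" unfolding pw by simp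
    finally have cnt: "real (num_queries k Qp vs) \<le> 2 * real k * real n powr (1 + 1 / real k)"
      unfolding nq .
    obtain g L where st: "stf k H = (g, L)" by (cases "stf k H")
    have Ik: "Inv vs k ({0,1} \<union> (\<Union>j<k. set (H ! j))) (g, L)"
      using main_inv[OF vi, of k] st unfolding H_def by simp
    have sub: "{0,1} \<union> (\<Union>j<k. set (H ! j)) \<subseteq> cut_points Qp H"
    proof
      fix y assume y: "y \<in> {0,1} \<union> (\<Union>j<k. set (H ! j))"
      show "y \<in> cut_points Qp H"
      proof (cases "y \<in> {0,1}")
        case True then show ?thesis unfolding cut_points_def by blast
      next
        case False
        then obtain j where j: "j < k" "y \<in> set (H ! j)" using y by auto
        have tk: "take j H = transcript Qp (answer vs) j"
          unfolding H_def by (rule transcript_take) (use j in simp)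
        have Hj: "H ! j = map (answer vs) (Qp (take j H))"
          unfolding tk unfolding H_def by (rule transcript_nth[OF j(1)])
        obtain q where q: "q \<in> set (Qp (take j H))" "y = answer vs q" using j(2) unfolding Hj by auto
        have "(q, y) \<in> set (zip (Qp (take j H)) (H ! j))" unfolding Hj q(2) by (rule zip_map_self[OF q(1)])
        moreover have "is_cut q" using Qp_cut[OF q(1)] .
        moreover have "j < length H" unfolding H_def using j by simp
        ultimately show ?thesis unfolding cut_points_def by blast
      qed
    qed
    have Ik': "Inv vs k (cut_points Qp H) (g, L)" using Inv_mono[OF Ik sub] .
    have al: "proportional_interval_allocation n vs (cut_points Qp H)
        (\<lambda>i. ((\<lambda>j. if n \<le> j then 1 else L j) (g i), (\<lambda>j. if n \<le> j then 1 else L j) (Suc (g i))))"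
      by (rule final[OF vi Ik']) (auto simp: cut_points_def)
    have "Outp H = (\<lambda>i. ((\<lambda>j. if n \<le> j then 1 else L j) (g i), (\<lambda>j. if n \<le> j then 1 else L j) (Suc (g i))))"
      unfolding Outp_def bnd_def st fst_conv snd_conv by (rule refl)
    then have al': "proportional_interval_allocation n vs (cut_points Qp H) (Outp H)" using al by simp
    show "let h = transcript Qp (answer vs) k in
          valid_run n k Qp vs \<and>
          real (num_queries k Qp vs) \<le> 2 * real k * real n powr (1 + 1 / real k) \<and>
          proportional_interval_allocation n vs (cut_points Qp h) (Outp h)"
      unfolding Let_def H_def[symmetric] using vr cnt al' by simp
  qed
qed

end
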